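(* Let $f=a_1+2a_2+4a_3\in\mathcal{GB}_n^8$ with $a_1,a_2,a_3\in\mathcal{B}_n$. If $f$ is gbent, then its Gray image $\psi(f)(\mathbf{x},y_1,y_2)=a_1(\mathbf{x})y_1\oplus a_2(\mathbf{x})y_2\oplus a_3(\mathbf{x})$ is a semibent function in $\mathcal{B}_{n+2}$.
   Context: $\mathcal{B}_m$: Boolean functions $\mathbb{F}_2^m\to\mathbb{F}_2$; $\mathcal{GB}_n^q$: functions $\mathbb{F}_2^n\to\mathbb{Z}_q$ (Boolean values viewed as integers, sum in $\mathbb{Z}_8$). $\mathcal{H}^{(q)}_f(\mathbf{u})=\sum_{\mathbf{x}}\zeta_q^{f(\mathbf{x})}(-1)^{\mathbf{u}\cdot\mathbf{x}}$ with $\zeta_q=e^{2\pi i/q}$; $f$ is gbent if $|\mathcal{H}^{(q)}_f(\mathbf{u})|=2^{n/2}$ for all $\mathbf{u}$. $\mathcal{W}_g(\mathbf{w})=\sum_{\mathbf{z}}(-1)^{g(\mathbf{z})+\mathbf{w}\cdot\mathbf{z}}$. A Boolean function $g$ on $\mathbb{F}_2^m$ is $s$-plateaued if $|\mathcal{W}_g(\mathbf{w})|\in\{0,2^{(m+s)/2}\}$ for all $\mathbf{w}$; it is semibent if it is $1$-plateaued ($m$ odd) or $2$-plateaued ($m$ even). *)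

theory Defs
  imports Complex_Main
begin

text \<open>Vectors of F_2^n are boolean lists of length n.\<close>
definition vecs :: "nat \<Rightarrow> bool list set" where
  "vecs n = {xs. length xs = n}"

definition dotp :: "bool list \<Rightarrow> bool list \<Rightarrow> bool" where
  "dotp u x = odd (card {i. i < length x \<and> u ! i \<and> x ! i})"

definition sgnb :: "bool \<Rightarrow> real" where
  "sgnb b = (if b then -1 else 1)"

definition gwalsh :: "nat \<Rightarrow> nat \<Rightarrow> (bool list \<Rightarrow> int) \<Rightarrow> bool list \<Rightarrow> complex" where
  "gwalsh q n f u = (\<Sum>x\<in>vecs n. cis (2 * pi * of_int (f x) / of_nat q) * complex_of_real (sgnb (dotp u x)))"

definition gbent :: "nat \<Rightarrow> nat \<Rightarrow> (bool list \<Rightarrow> int) \<Rightarrow> bool" where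
  "gbent q n f = (\<forall>u\<in>vecs n. cmod (gwalsh q n f u) = 2 powr (real n / 2))"

definition walsh :: "nat \<Rightarrow> (bool list \<Rightarrow> bool) \<Rightarrow> bool list \<Rightarrow> real" where
  "walsh m g w = (\<Sum>z\<in>vecs m. sgnb (g z \<noteq> dotp w z))"

definition plateaued :: "nat \<Rightarrow> nat \<Rightarrow> (bool list \<Rightarrow> bool) \<Rightarrow> bool" where
  "plateaued s m g = (\<forall>w\<in>vecs m. \<bar>walsh m g w\<bar> \<in> {0, 2 powr ((real m + real s) / 2)})"

definition semibent :: "nat \<Rightarrow> (bool list \<Rightarrow> bool) \<Rightarrow> bool" where
  "semibent m g = ((odd m \<and> plateaued 1 m g) \<or> (even m \<and> plateaued 2 m g))"

definition gbf :: "(bool list \<Rightarrow> bool) \<Rightarrow> (bool list \<Rightarrow> bool) \<Rightarrow> (bool list \<Rightarrow> bool) \<Rightarrow> bool list \<Rightarrow> int" where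
  "gbf a1 a2 a3 x = of_bool (a1 x) + 2 * of_bool (a2 x) + 4 * of_bool (a3 x)"

text \<open>Gray image on F_2^(n+2): input z = x @ [y1, y2].\<close>
definition gray :: "nat \<Rightarrow> (bool list \<Rightarrow> bool) \<Rightarrow> (bool list \<Rightarrow> bool) \<Rightarrow> (bool list \<Rightarrow> bool) \<Rightarrow> bool list \<Rightarrow> bool" where
  "gray n a1 a2 a3 z = (let x = take n z; y1 = z ! n; y2 = z ! (n+1) in
     ((a1 x \<and> y1) \<noteq> (a2 x \<and> y2)) \<noteq> a3 x)"

end

theory Submission
  imports Defs
begin


lemma sq_mod4: "(x::int)^2 mod 4 = (if even x then 0 else 1)"
proof (cases "even x")
  case True then obtain k where "x = 2*k" by blast
  then show ?thesis by (simp add: power2_eq_square)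
next
  case False then obtain k where "x = 2*k+1" using oddE by blast
  then have "x^2 = 1 + (k*k+k)*4" by (simp add: power2_eq_square algebra_simps)
  then have "x^2 mod 4 = 1 mod 4" by (simp only: mod_mult_self1)
  then show ?thesis using False by simp
qed

lemma sq4: "\<exists>D. (x::int)^2 = 4*D + (if even x then 0 else 1)"
  using div_mult_mod_eq[of "x^2" 4] unfolding sq_mod4 by (metis mult.commute)
lemma par4: assumes "(p::int)^2+q^2+r^2+s^2 = 4*Y" shows "even p = even q \<and> even q = even r \<and> even r = even s"
proof -
  obtain A B C D where "p^2 = 4*A + (if even p then 0 else 1)" "q^2 = 4*B + (if even q then 0 else 1)"
    "r^2 = 4*C + (if even r then 0 else 1)" "s^2 = 4*D + (if even s then 0 else 1)" using sq4 by metis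
  then have "4*A + (if even p then 0 else 1) + (4*B + (if even q then 0 else 1)) + (4*C + (if even r then 0 else 1)) + (4*D + (if even s then 0 else 1)) = 4*Y" using assms by simp
  then show ?thesis by (cases "even p"; cases "even q"; cases "even r"; cases "even s") presburger+
qed

lemma no_sqrt2: "(M::int)^2 = 2*K^2 \<Longrightarrow> K = 0"
proof (induction "nat \<bar>K\<bar>" arbitrary: M K rule: less_induct)
  case less
  show ?case
  proof (rule ccontr)
    assume K0: "K \<noteq> 0"
    have "even (M^2)" using less.prems by simp
    then have "even M" by simp
    then obtain m where m: "M = 2*m" by blast
    then have "K^2 = 2*m^2" using less.prems by (simp add: power2_eq_square)
    then have "even (K^2)" by simp
    then have "even K" by simp
    then obtain k where k: "K = 2*k" by blast
    have "m^2 = 2*k^2" using \<open>K^2 = 2*m^2\<close> k by (simp add: power2_eq_square)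
    moreover have "nat \<bar>k\<bar> < nat \<bar>K\<bar>" using k K0 by auto
    ultimately have "k = 0" using less.hyps by blast
    then show False using k K0 by simp
  qed
qed

lemma key:
  fixes p q r s :: int
  assumes "p^2+q^2+r^2+s^2 = 2^n" "p*(r-s)+q*(r+s)=0"
  shows "\<forall>x\<in>{p,q,r,s}. \<bar>x\<bar> = 0 \<or> \<bar>x\<bar> = 2^(n div 2)"
  using assms
proof (induction n arbitrary: p q r s rule: less_induct)
  case (less n)
  show ?case
  proof (cases "n \<le> 1")
    case True
    have t2: "2^n \<le> (2::int)" using True by (cases n) auto
    have nn: "0 \<le> p^2" "0\<le>q^2" "0\<le>r^2" "0\<le>s^2" by simp_all
    have all: "p^2 \<le> 2 \<and> q^2 \<le> 2 \<and> r^2 \<le> 2 \<and> s^2 \<le> 2" using less.prems(1) t2 nn by linarith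
    have b: "x^2 \<le> 2" if "x\<in>{p,q,r,s}" for x using that all by auto
    have "\<bar>x\<bar> \<le> 1" if "x\<in>{p,q,r,s}" for x
    proof (rule ccontr)
      assume "\<not> \<bar>x\<bar> \<le> 1" then have "2 \<le> \<bar>x\<bar>" by simp
      then have "2*2 \<le> \<bar>x\<bar>*\<bar>x\<bar>" by (intro mult_mono) auto
      then show False using b[OF that] by (simp add: power2_eq_square)
    qed
    moreover have "n div 2 = 0" using True by auto
    ultimately show ?thesis by force
  next
    case False
    define m where "m = n - 2"
    have nm: "n = m + 2" using False unfolding m_def by simp
    have par: "even p = even q \<and> even q = even r \<and> even r = even s"
      using par4[of p q r s "2^m"] less.prems(1) nm by (simp add: power_add)
    show ?thesis
    proof (cases "even p")
      case True
      then have ev: "even p" "even q" "even r" "even s" using par by auto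
      obtain p' where e1: "p = 2*p'" using ev(1) by blast
      obtain q' where e2: "q = 2*q'" using ev(2) by blast
      obtain r' where e3: "r = 2*r'" using ev(3) by blast
      obtain s' where e4: "s = 2*s'" using ev(4) by blast
      note e = e1 e2 e3 e4
      have "4*(p'^2+q'^2+r'^2+s'^2) = 4*2^m" using less.prems(1) e nm
        by (simp add: power2_eq_square power_add algebra_simps)
      then have h1: "p'^2+q'^2+r'^2+s'^2 = 2^m" by simp
      have "4*(p'*(r'-s')+q'*(r'+s')) = 0" using less.prems(2) e by (simp add: algebra_simps)
      then have h2: "p'*(r'-s')+q'*(r'+s') = 0" by simp
      have IH: "\<forall>x\<in>{p',q',r',s'}. \<bar>x\<bar> = 0 \<or> \<bar>x\<bar> = 2^(m div 2)"
        using less.IH[OF _ h1 h2] nm by simp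
      have "n div 2 = Suc (m div 2)" using nm by simp
      then show ?thesis using IH e by (auto simp: abs_mult)
    next
      case False
      then have od: "odd p" "odd q" "odd r" "odd s" using par by auto
      have "even (r - s)" "even (r+s)" using od by auto
      then obtain e f where ef: "r - s = 2*e" "r + s = 2*f" by blast
      have "2*(p*e+q*f) = 0" using less.prems(2) ef by (simp add: algebra_simps)
      then have "p*e+q*f = 0" by (simp only: mult_eq_0_iff) simp
      then have "even (p*e+q*f)" by simp
      then have "even e = even f" using od by auto
      then have "even (e+f)" by auto
      moreover have "e + f = r" using ef by simp
      ultimately show ?thesis using od by simp
    qed
  qed
qed


lemma fin_vecs: "finite (vecs n)"
proof -
  have "vecs n = {xs. set xs \<subseteq> (UNIV::bool set) \<and> length xs = n}" unfolding vecs_def by auto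
  then show ?thesis using finite_lists_length_eq[of "UNIV::bool set" n] by simp
qed

lemma sum_vecs_Suc: "(\<Sum>z\<in>vecs (Suc m). g z) = (\<Sum>x\<in>vecs m. g (x@[False]) + g (x@[True]))"
proof -
  have e: "vecs (Suc m) = (\<lambda>x. x@[False]) ` vecs m \<union> (\<lambda>x. x@[True]) ` vecs m"
  proof
    show "vecs (Suc m) \<subseteq> (\<lambda>x. x@[False]) ` vecs m \<union> (\<lambda>x. x@[True]) ` vecs m"
    proof
      fix z assume "z \<in> vecs (Suc m)"
      then have l: "length z = Suc m" by (simp add: vecs_def)
      then have "z = butlast z @ [last z]" by (intro append_butlast_last_id[symmetric]) auto
      moreover have "butlast z \<in> vecs m" using l by (simp add: vecs_def)
      ultimately show "z \<in> (\<lambda>x. x@[False]) ` vecs m \<union> (\<lambda>x. x@[True]) ` vecs m"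
        by (cases "last z") auto
    qed
  qed (auto simp: vecs_def)
  have "(\<Sum>z\<in>vecs (Suc m). g z) = (\<Sum>z\<in>(\<lambda>x. x@[False]) ` vecs m. g z) + (\<Sum>z\<in>(\<lambda>x. x@[True]) ` vecs m. g z)"
    unfolding e by (rule sum.union_disjoint) (auto simp: fin_vecs)
  also have "\<dots> = (\<Sum>x\<in>vecs m. g (x@[False])) + (\<Sum>x\<in>vecs m. g (x@[True]))"
    by (subst sum.reindex, simp add: inj_on_def)+ simp
  finally show ?thesis by (simp add: sum.distrib)
qed

lemma dotp_snoc: assumes "length u = length x"
  shows "dotp (u@[a]) (x@[b]) = (dotp u x \<noteq> (a \<and> b))"
proof -
  let ?m = "length x"
  have e: "{i. i < length (x@[b]) \<and> (u@[a]) ! i \<and> (x@[b]) ! i} =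
        {i. i < ?m \<and> u ! i \<and> x ! i} \<union> (if a \<and> b then {?m} else {})"
    using assms by (auto simp: nth_append less_Suc_eq)
  have f: "finite {i. i < ?m \<and> u ! i \<and> x ! i}" by simp
  show ?thesis unfolding dotp_def e using f by (auto simp: card_insert_if)
qed

lemma len2: "length (xs::'a list) = 2 \<Longrightarrow> xs = [xs!0, xs!1]"
  by (cases xs; cases "tl xs") auto

lemma list_split2: assumes "length w = n + 2" shows "w = take n w @ [w!n, w!Suc n]"
proof -
  have "length (drop n w) = 2" using assms by simp
  then have "drop n w = [drop n w ! 0, drop n w ! 1]" by (rule len2)
  then have "drop n w = [w!n, w!Suc n]" using assms by simp
  then show ?thesis by (metis append_take_drop_id)
qed



definition Sf :: "(bool list \<Rightarrow> bool) \<Rightarrow> (bool list \<Rightarrow> bool) \<Rightarrow> (bool list \<Rightarrow> bool) \<Rightarrow> nat \<Rightarrow> bool \<Rightarrow> bool \<Rightarrow> bool list \<Rightarrow> int" where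
  "Sf a1 a2 a3 n v1 v2 u = (\<Sum>x\<in>vecs n. if a1 x = v1 \<and> a2 x = v2 then (if a3 x \<noteq> dotp u x then -1 else 1) else 0)"

lemma walsh_gray:
  assumes u: "length u = n"
  shows "walsh (n+2) (gray n a1 a2 a3) (u@[v1,v2]) = 4 * real_of_int (Sf a1 a2 a3 n v1 v2 u)"
proof -
  have "walsh (n+2) (gray n a1 a2 a3) (u@[v1,v2]) =
    (\<Sum>x\<in>vecs n. \<Sum>y1\<in>{False,True}. \<Sum>y2\<in>{False,True}.
        sgnb (gray n a1 a2 a3 (x@[y1,y2]) \<noteq> dotp (u@[v1,v2]) (x@[y1,y2])))"
    unfolding walsh_def by (simp add: sum_vecs_Suc add_ac)
  also have "\<dots> = (\<Sum>x\<in>vecs n. 4 * real_of_int (if a1 x = v1 \<and> a2 x = v2 then (if a3 x \<noteq> dotp u x then -1 else 1) else 0))"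
  proof (rule sum.cong[OF refl])
    fix x assume "x \<in> vecs n"
    then have lx: "length x = n" by (simp add: vecs_def)
    have g: "gray n a1 a2 a3 (x@[y1,y2]) = (((a1 x \<and> y1) \<noteq> (a2 x \<and> y2)) \<noteq> a3 x)" for y1 y2
      unfolding gray_def using lx by (simp add: nth_append)
    have d: "dotp (u@[v1,v2]) (x@[y1,y2]) = ((dotp u x \<noteq> (v1 \<and> y1)) \<noteq> (v2 \<and> y2))" for y1 y2
      using dotp_snoc[of "u@[v1]" "x@[y1]" v2 y2] dotp_snoc[of u x v1 y1] u lx by simp
    show "(\<Sum>y1\<in>{False,True}. \<Sum>y2\<in>{False,True}.
        sgnb (gray n a1 a2 a3 (x@[y1,y2]) \<noteq> dotp (u@[v1,v2]) (x@[y1,y2]))) =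
       4 * real_of_int (if a1 x = v1 \<and> a2 x = v2 then (if a3 x \<noteq> dotp u x then -1 else 1) else 0)"
      unfolding g d by (cases "a1 x"; cases "a2 x"; cases "a3 x"; cases "dotp u x"; cases v1; cases v2) (simp_all add: sgnb_def)
  qed
  also have "\<dots> = 4 * real_of_int (Sf a1 a2 a3 n v1 v2 u)"
    unfolding Sf_def by (simp add: sum_distrib_left)
  finally show ?thesis .
qed



definition zz :: complex where "zz = Complex (sqrt 2 / 2) (sqrt 2 / 2)"

lemma cis45: "cis (pi/4) = zz"
  by (simp add: complex_eq_iff zz_def cos_45 sin_45)

lemma cisb: "cis (of_bool b * t) = (if b then cis t else 1)"
  by (cases b) simp_all

lemma cis8: "cis (2*pi*of_int(of_bool b1 + 2*of_bool b2 + 4*of_bool b3)/of_nat 8) =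
   (if b1 then zz else 1)*(if b2 then \<i> else 1)*(if b3 then -1 else 1)"
proof -
  have "2*pi*of_int(of_bool b1 + 2*of_bool b2 + 4*of_bool b3)/of_nat 8 =
        of_bool b1 * (pi/4) + of_bool b2 * (pi/2) + of_bool b3 * pi"
    by (simp add: field_simps)
  then show ?thesis by (simp only: cis_mult[symmetric] cisb cis45 cis_pi_half cis_pi)
qed

lemma gw_point:
  "cis (2*pi*of_int(gbf a1 a2 a3 x)/of_nat 8) * complex_of_real (sgnb d) =
    of_int (if a1 x = False \<and> a2 x = False then (if a3 x \<noteq> d then -1 else 1) else 0)
  + \<i> * of_int (if a1 x = False \<and> a2 x = True then (if a3 x \<noteq> d then -1 else 1) else 0)
  + zz * of_int (if a1 x = True \<and> a2 x = False then (if a3 x \<noteq> d then -1 else 1) else 0)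
  + zz * \<i> * of_int (if a1 x = True \<and> a2 x = True then (if a3 x \<noteq> d then -1 else 1) else 0)"
  unfolding gbf_def cis8
  by (cases "a1 x"; cases "a2 x"; cases "a3 x"; cases d) (simp_all add: sgnb_def)

lemma gwalsh_S:
  "gwalsh 8 n (gbf a1 a2 a3) u = of_int (Sf a1 a2 a3 n False False u) + \<i> * of_int (Sf a1 a2 a3 n False True u)
     + zz * of_int (Sf a1 a2 a3 n True False u) + zz * \<i> * of_int (Sf a1 a2 a3 n True True u)"
  unfolding gwalsh_def gw_point Sf_def
  by (simp add: sum.distrib sum_distrib_left)

lemma norm_sq:
  fixes p q r t :: int
  shows "(cmod (of_int p + \<i> * of_int q + zz * of_int r + zz * \<i> * of_int t))^2 =
     real_of_int (p^2+q^2+r^2+t^2) + sqrt 2 * real_of_int (p*(r-t)+q*(r+t))"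
proof -
  let ?c = "sqrt 2 / 2"
  have s2: "sqrt 2 * sqrt 2 = (2::real)" by simp
  have c2: "?c * ?c = 1/2" by (metis s2 times_divide_times_eq mult_2 divide_self_if zero_neq_numeral one_add_one add_divide_distrib)
  have "(cmod (of_int p + \<i> * of_int q + zz * of_int r + zz * \<i> * of_int t))^2 =
        (p + ?c*r - ?c*t)^2 + (q + ?c*r + ?c*t)^2"
    unfolding cmod_power2 by (simp add: zz_def)
  also have "\<dots> = p^2+q^2 + 2*?c*(p*(r-t)+q*(r+t)) + (?c*?c)*((r-t)^2+(r+t)^2)"
    by (simp add: power2_eq_square algebra_simps)
  also have "\<dots> = real_of_int (p^2+q^2+r^2+t^2) + sqrt 2 * real_of_int (p*(r-t)+q*(r+t))"
    unfolding c2 by (simp add: power2_eq_square algebra_simps)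
  finally show ?thesis .
qed



lemma abs_real_aux: assumes "\<bar>s::int\<bar> = 2^k" shows "\<bar>real_of_int s\<bar> = 2^k"
proof -
  have "real_of_int \<bar>s\<bar> = real_of_int (2^k)" using assms by (simp only:)
  then show ?thesis by simp
qed

lemma S_bound:
  assumes gb: "gbent 8 n (gbf a1 a2 a3)" and u: "u \<in> vecs n"
  shows "\<bar>Sf a1 a2 a3 n v1 v2 u\<bar> = 0 \<or> \<bar>Sf a1 a2 a3 n v1 v2 u\<bar> = 2^(n div 2)"
proof -
  define p where "p = Sf a1 a2 a3 n False False u"
  define q where "q = Sf a1 a2 a3 n False True u"
  define r where "r = Sf a1 a2 a3 n True False u"
  define t where "t = Sf a1 a2 a3 n True True u"
  have "cmod (gwalsh 8 n (gbf a1 a2 a3) u) = 2 powr (real n / 2)" using gb u unfolding gbent_def by blast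
  then have "(cmod (gwalsh 8 n (gbf a1 a2 a3) u))^2 = 2 powr (real n / 2) * 2 powr (real n / 2)"
    by (simp add: power2_eq_square)
  also have "\<dots> = 2^n" by (simp add: powr_add[symmetric] powr_realpow)
  finally have "real_of_int (p^2+q^2+r^2+t^2) + sqrt 2 * real_of_int (p*(r-t)+q*(r+t)) = 2^n"
    unfolding gwalsh_S norm_sq p_def q_def r_def t_def .
  then have e: "sqrt 2 * real_of_int (p*(r-t)+q*(r+t)) = real_of_int (2^n - (p^2+q^2+r^2+t^2))"
    by simp
  define K where "K = p*(r-t)+q*(r+t)"
  define M where "M = 2^n - (p^2+q^2+r^2+t^2)"
  have "(sqrt 2 * real_of_int K)^2 = (real_of_int M)^2" using e K_def M_def by simp
  then have "real_of_int (M^2) = real_of_int (2*K^2)" by (simp add: power_mult_distrib)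
  then have "M^2 = 2*K^2" by (simp only: of_int_eq_iff)
  then have K0: "K = 0" by (rule no_sqrt2)
  have "real_of_int M = sqrt 2 * real_of_int K" using e unfolding K_def M_def by simp
  then have "M = 0" using K0 by simp
  then have P: "p^2+q^2+r^2+t^2 = 2^n" unfolding M_def by simp
  have "\<forall>x\<in>{p,q,r,t}. \<bar>x\<bar> = 0 \<or> \<bar>x\<bar> = 2^(n div 2)" using key[OF P] K0 K_def by simp
  then show ?thesis unfolding p_def q_def r_def t_def by (cases v1; cases v2) auto
qed

theorem mainTheorem11:
  fixes n :: nat and a1 a2 a3 :: "bool list \<Rightarrow> bool"
  assumes "gbent 8 n (gbf a1 a2 a3)"
  shows "semibent (n + 2) (gray n a1 a2 a3)"
proof -
  have W: "\<bar>walsh (n+2) (gray n a1 a2 a3) w\<bar> = 0 \<or> \<bar>walsh (n+2) (gray n a1 a2 a3) w\<bar> = 4 * 2^(n div 2)"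
    if w: "w \<in> vecs (n+2)" for w
  proof -
    have lw: "length w = n+2" using w by (simp add: vecs_def)
    have u: "take n w \<in> vecs n" using lw by (simp add: vecs_def)
    have "walsh (n+2) (gray n a1 a2 a3) w = 4 * real_of_int (Sf a1 a2 a3 n (w!n) (w!Suc n) (take n w))"
      using walsh_gray[of "take n w" n a1 a2 a3 "w!n" "w!Suc n"] list_split2[OF lw] lw by simp
    moreover have "\<bar>Sf a1 a2 a3 n (w!n) (w!Suc n) (take n w)\<bar> = 0 \<or> \<bar>Sf a1 a2 a3 n (w!n) (w!Suc n) (take n w)\<bar> = 2^(n div 2)"
      by (rule S_bound[OF assms u])
    then have "\<bar>real_of_int (Sf a1 a2 a3 n (w!n) (w!Suc n) (take n w))\<bar> = 0 \<or> \<bar>real_of_int (Sf a1 a2 a3 n (w!n) (w!Suc n) (take n w))\<bar> = 2^(n div 2)"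
      using abs_real_aux by auto
    ultimately show ?thesis by (auto simp: abs_mult)
  qed
  show ?thesis
  proof (cases "even n")
    case True
    then obtain k where k: "n = 2*k" by blast
    have a: "(real (n+2) + real 2)/2 = real (k+2)" using k by simp
    have "(2::real) powr ((real (n+2) + real 2)/2) = 2^(k+2)" unfolding a by (rule powr_realpow) simp
    moreover have "n div 2 = k" using k by simp
    ultimately have "(4::real) * 2^(n div 2) = 2 powr ((real (n+2) + real 2)/2)" by simp
    then show ?thesis unfolding semibent_def plateaued_def using W True by auto
  next
    case False
    then obtain k where k: "n = 2*k+1" using oddE by blast
    have a: "(real (n+2) + real 1)/2 = real (k+2)" using k by simp
    have "(2::real) powr ((real (n+2) + real 1)/2) = 2^(k+2)" unfolding a by (rule powr_realpow) simp
    moreover have "n div 2 = k" using k by simp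
    ultimately have "(4::real) * 2^(n div 2) = 2 powr ((real (n+2) + real 1)/2)" by simp
    then show ?thesis unfolding semibent_def plateaued_def using W False by auto
  qed
qed


end
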